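(* Let $R$ be an integral domain and $M$ an $R$-module. If $x,y\in M$ are non-torsion elements and $[x]=[y]\in\mathbb{P}(M)$, then there exist $a,b\in R$ such that $ax=by\neq0$.
   Context: For an $R$-module $M$ let $M^\circ=M\setminus\{0\}$. Define a relation on $M^\circ$ by $x\sim' y$ if there exist $m\in M$ and $r,s\in R$ with $x=rm$ and $y=sm$. Let $\sim$ be the equivalence relation generated by $\sim'$ (i.e. $x\sim y$ iff there is a finite chain $x=x_0\sim'x_1\sim'\cdots\sim'x_n=y$). The projective space is $\mathbb{P}(M)=M^\circ/\sim$, and $[x]$ denotes the class of $x$. An element $x$ is torsion if $rx=0$ for some nonzero $r\in R$. *)

theory Defs
  imports Complex_Main
begin

text \<open>An R-module M is represented by a type 'b :: ab_group_add together with a scalar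
  multiplication scale satisfying the locale module (HOL.Modules); R is a type of class idom.\<close>

definition proj_rel0 :: "('a::comm_ring_1 \<Rightarrow> 'b::ab_group_add \<Rightarrow> 'b) \<Rightarrow> 'b \<Rightarrow> 'b \<Rightarrow> bool" where
  "proj_rel0 scale x y \<longleftrightarrow> x \<noteq> 0 \<and> y \<noteq> 0 \<and> (\<exists>m r s. x = scale r m \<and> y = scale s m)"

definition proj_rel :: "('a::comm_ring_1 \<Rightarrow> 'b::ab_group_add \<Rightarrow> 'b) \<Rightarrow> 'b \<Rightarrow> 'b \<Rightarrow> bool" where
  "proj_rel scale x y \<longleftrightarrow> x \<noteq> 0 \<and> y \<noteq> 0 \<and> (proj_rel0 scale)\<^sup>*\<^sup>* x y"

definition proj_class :: "('a::comm_ring_1 \<Rightarrow> 'b::ab_group_add \<Rightarrow> 'b) \<Rightarrow> 'b \<Rightarrow> 'b set" where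
  "proj_class scale x = {y. proj_rel scale x y}"

definition torsion :: "('a::comm_ring_1 \<Rightarrow> 'b::ab_group_add \<Rightarrow> 'b) \<Rightarrow> 'b \<Rightarrow> bool" where
  "torsion scale x \<longleftrightarrow> (\<exists>r. r \<noteq> 0 \<and> scale r x = 0)"

end

theory Submission
  imports Defs
begin

theorem theorem4p3:
  fixes scale :: "'a::idom \<Rightarrow> 'b::ab_group_add \<Rightarrow> 'b" and x y :: 'b
  assumes "module scale"
    and "\<not> torsion scale x" and "\<not> torsion scale y"
    and "proj_class scale x = proj_class scale y"
  shows "\<exists>a b. scale a x = scale b y \<and> scale a x \<noteq> 0"
proof -
  interpret module scale by fact
  have x0: "x \<noteq> 0" using assms(2) unfolding torsion_def by (metis one_neq_zero scale_zero_right)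
  have "proj_rel scale x x" using x0 unfolding proj_rel_def by simp
  hence "x \<in> proj_class scale y" using assms(4) unfolding proj_class_def by (metis mem_Collect_eq)
  hence ch: "(proj_rel0 scale)\<^sup>*\<^sup>* y x" unfolding proj_class_def proj_rel_def by simp
  have inv: "\<not> torsion scale z \<and> (\<exists>a b. a \<noteq> 0 \<and> b \<noteq> 0 \<and> scale a y = scale b z)" if "(proj_rel0 scale)\<^sup>*\<^sup>* y z" for z
    using that
  proof (induction rule: rtranclp_induct)
    case base
    then show ?case using assms(3) by (metis one_neq_zero scale_one)
  next
    case (step z w)
    from step.IH obtain a b where ab: "a \<noteq> 0" "b \<noteq> 0" "scale a y = scale b z"
      and zt: "\<not> torsion scale z" by blast
    from step.hyps(2) obtain m r s where w0: "w \<noteq> 0" and z: "z = scale r m" and w: "w = scale s m"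
      unfolding proj_rel0_def by blast
    have r0: "r \<noteq> 0" using zt z unfolding torsion_def by (metis one_neq_zero scale_zero_left scale_zero_right)
    have mt: "\<not> torsion scale m"
    proof
      assume "torsion scale m"
      then obtain t where "t \<noteq> 0" "scale t m = 0" unfolding torsion_def by blast
      hence "scale t z = 0" using z by (metis scale_left_commute scale_zero_right)
      thus False using zt \<open>t \<noteq> 0\<close> unfolding torsion_def by blast
    qed
    have s0: "s \<noteq> 0" using w0 w by auto
    have wt: "\<not> torsion scale w"
    proof
      assume "torsion scale w"
      then obtain t where "t \<noteq> 0" "scale t w = 0" unfolding torsion_def by blast
      hence "scale (t * s) m = 0" using w by (simp add: scale_scale)
      moreover have "t * s \<noteq> 0" using \<open>t \<noteq> 0\<close> s0 by simp
      ultimately show False using mt unfolding torsion_def by blast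
    qed
    have "scale (s * a) y = scale s (scale a y)" by (simp add: scale_scale)
    also have "\<dots> = scale (s * (b * r)) m" using ab(3) z by (simp add: scale_scale)
    also have "\<dots> = scale ((b * r) * s) m" by (simp only: mult.commute)
    also have "\<dots> = scale (b * r) w" using w by (simp add: scale_scale)
    finally have "scale (s * a) y = scale (b * r) w" .
    moreover have "s * a \<noteq> 0" "b * r \<noteq> 0" using ab s0 r0 by simp_all
    ultimately show ?case using wt by blast
  qed
  from inv[OF ch] obtain a b where ab: "a \<noteq> 0" "b \<noteq> 0" "scale a y = scale b x" by blast
  have "scale a y \<noteq> 0" using ab assms(3) unfolding torsion_def by blast
  thus ?thesis using ab by metis
qed

end
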